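(* Assume the standing setting described in the context, with $\varepsilon$ fixed, and let $\alpha>1$, $\delta>0$, $c_0,c_1,c_2>0$, $a_1(\alpha)>0$ satisfy (L1) and (L2) below, and let $b_0,b_1>0$ satisfy (L3) below for this $\delta$: (L1) for every solution $x$ of (S) and every $t\ge0$ with $\|x_t\|_h\le\delta$, $\frac{d}{dt}v(t,x_t)\le-c_0\|x(t)\|^{\gamma+\mu-1}-c_1\|x(t-h)\|^{\gamma+\mu-1}-c_2\int_{-h}^0\|x(t+\theta)\|^{\gamma+\mu-1}d\theta$; (L2) for all $t\ge0$ and $\varphi\in S_\alpha$ with $\|\varphi\|_h\le\delta$, $v(t,\varphi)\ge a_1(\alpha)\|\varphi(0)\|^\gamma+\mathrm w_1\int_{-h}^0\|\varphi(\theta)\|^{\gamma+\mu-1}d\theta$; (L3) for all $t\ge0$ and $\varphi$ with $\|\varphi\|_h\le\delta$, $v(t,\varphi)\le b_0\|\varphi(0)\|^\gamma+b_1\int_{-h}^0\|\varphi(\theta)\|^\gamma d\theta$. Let $b_2=(\beta m+\mathrm w_1+h\mathrm w_2)h$, $b_3=\beta p(\hat bh+\omega(\varepsilon)/\varepsilon)$, and let $\Delta>0$ be a positive root of $\alpha_1\Delta^\gamma+b_2\Delta^{\gamma+\mu-1}+b_3\Delta^{\gamma+\sigma-1}=a_1(\alpha)\delta^\gamma$. Put $b=\max\{b_0,b_1\}$, $c=\min\{c_0,c_2\}$, $K_\Delta=\alpha_1+b_2\Delta^{\mu-1}+b_3\Delta^{\sigma-1}$ and $$\rho=\frac{c}{b^{\frac{\gamma+\mu-1}{\gamma}}\big(2\max\{1,h\}\big)^{\frac{\mu-1}{\gamma}}}.$$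 Let $\tilde\rho\in(0,\rho)$ satisfy $$1+\tilde\rho\, h\,\frac{\mu-1}{\gamma}\,K_\Delta^{\frac{\mu-1}{\gamma}}\,\Delta^{\mu-1}\le\alpha^{\mu-1}.$$ Then for every $\varphi\in C_{[-h,0]}$ with $\|\varphi\|_h<\Delta$ and all $t\ge0$, $$\|x(t,\varphi)\|\le\hat c_1\|\varphi\|_h\Big[1+\hat c_2\|\varphi\|_h^{\mu-1}t\Big]^{-\frac1{\mu-1}},$$ where $\hat c_1=\big(K_\Delta/a_1(\alpha)\big)^{1/\gamma}$ and $\hat c_2=\tilde\rho\,\frac{\mu-1}{\gamma}\,K_\Delta^{\frac{\mu-1}{\gamma}}$.
   Context: Standing setting. Fix $n\ge1$ and a delay $h>0$. $\|\cdot\|$ is the Euclidean norm on $\mathbb R^n$ (and the induced operator norm on matrices). $C_{[-h,0]}$ is the space of continuous $\varphi:[-h,0]\to\mathbb R^n$ with norm $\|\varphi\|_h=\max_{\theta\in[-h,0]}\|\varphi(\theta)\|$. Consider system (S): $\dot x(t)=f(x(t),x(t-h))+B(t)Q(x(t),x(t-h))$, $t\ge0$, with initial function $\varphi\in C_{[-h,0]}$; $x(t,\varphi)$ denotes its solution and $x_t\in C_{[-h,0]}$ is the state $x_t(\theta)=x(t+\theta)$, $\theta\in[-h,0]$. Assumptions: (i) $f:\mathbb R^n\times\mathbb R^n\to\mathbb R^n$ is Lipschitz, continuously differentiable in both arguments, and homogeneous of degree $\mu>1$: $f(c\mathrm x_1,c\mathrm x_2)=c^\mu f(\mathrm x_1,\mathrm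 x_2)$ for all $c>0$; constants $m_1,m_2,\eta_{11},\eta_{12}\ge0$ are such that $\|f(\mathrm x_1,\mathrm x_2)\|\le m_1\|\mathrm x_1\|^\mu+m_2\|\mathrm x_2\|^\mu$ and $\|\partial f/\partial \mathrm x_1(\mathrm x_1,\mathrm x_2)\|\le \eta_{11}\|\mathrm x_1\|^{\mu-1}+\eta_{12}\|\mathrm x_2\|^{\mu-1}$. (ii) $B:[0,\infty)\to\mathbb R^{n\times n}$ is continuous with $\|B(t)\|\le\hat b$ for all $t$. (iii) $Q:\mathbb R^n\times\mathbb R^n\to\mathbb R^n$ is continuously differentiable and, for some $\sigma>1$ and constants $p_1,p_2,q_{jk}\ge0$, $\|Q(\mathrm x_1,\mathrm x_2)\|\le p_1\|\mathrm x_1\|^\sigma+p_2\|\mathrm x_2\|^\sigma$ and $\|\partial Q/\partial\mathrm x_j(\mathrm x_1,\mathrm x_2)\|\le q_{j1}\|\mathrm x_1\|^{\sigma-1}+q_{j2}\|\mathrm x_2\|^{\sigma-1}$, $j=1,2$. (iv) The delay-free system $\dot x=f(x,x)$ is asymptotically stable, and $V:\mathbb R^n\to\mathbb R$ is a positive definite, twice continuously differentiable function, homogeneous of degree $\gamma\ge2$, with constants $\mathrm w,\alpha_0,\alpha_1,\beta,\psi>0$ such that $(\partial V/\partial\mathrm x)^T f(\mathrm x,\mathrm x)\le-\mathrm w\|\mathrm x\|^{\gamma+\mu-1}$, $\alpha_0\|\mathrm x\|^\gamma\le V(\mathrm x)\le\alpha_1\|\mathrm x\|^\gamma$, $\|\partial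 V/\partial\mathrm x\|\le\beta\|\mathrm x\|^{\gamma-1}$, $\|\partial^2V/\partial\mathrm x^2\|\le\psi\|\mathrm x\|^{\gamma-2}$. Perturbation classes: case (a): $\int_0^tB(s)\,ds$ is bounded on $t\ge0$ and $\sigma>(\mu+1)/2$; case (b): $\frac1T\int_t^{t+T}B(s)\,ds\to0$ as $T\to+\infty$ uniformly in $t\ge0$, and $\sigma\ge\mu$. Define $L(t,\varepsilon)=\int_0^{t+h}e^{-\varepsilon(t+h-s)}B(s)\,ds$, where $\varepsilon=0$ in case (a) and $\varepsilon>0$ is a parameter in case (b). In case (b), $\omega(\varepsilon):=\sup_{t\ge0}\varepsilon\|L(t,\varepsilon)\|$ is finite and $\omega(\varepsilon)\to0$ as $\varepsilon\to0$. In case (a) let $l_0>0$ with $\|L(t,0)\|\le l_0$ for all $t\ge0$, and throughout read $\omega(\varepsilon)$ as $0$ and $\omega(\varepsilon)/\varepsilon$ as $l_0$. Fix $\mathrm w_1,\mathrm w_2>0$ with $\mathrm w_0:=\mathrm w-\mathrm w_1-h\mathrm w_2>0$. The functional $v:[0,\infty)\times C_{[-h,0]}\to\mathbb R$ is $v(t,\varphi)=V(\varphi(0))+\Big(\frac{\partial V}{\partial\mathrm x}(\varphi(0))\Big)^T\Big(\int_{-h}^0\big(f(\varphi(0),\varphi(\theta))+B(t+\theta+h)Q(\varphi(0),\varphi(\theta))\big)d\theta-L(t,\varepsilon)Q(\varphi(0),\varphi(0))\Big)+\int_{-h}^0(\mathrm w_1+(h+\theta)\mathrm w_2)\|\varphi(\theta)\|^{\gamma+\mu-1}d\theta.$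 For $\alpha>1$, $S_\alpha=\{\varphi\in C_{[-h,0]}:\|\varphi(\theta)\|\le\alpha\|\varphi(0)\|\ \forall\theta\in[-h,0]\}$. Notation: $m=m_1+m_2$, $p=p_1+p_2$. *)

theory Defs
  imports "HOL-Analysis.Analysis"
begin

text \<open>Vectors of R^n are elements of a Euclidean space 'a; matrices are
bounded linear maps (blinfun), whose norm is the induced operator norm.
Initial functions / states are functions real \<Rightarrow> 'a, only their values on [-h,0] matter.\<close>

definition hnorm :: "real \<Rightarrow> (real \<Rightarrow> 'a::real_normed_vector) \<Rightarrow> real" where
  "hnorm h \<phi> = (SUP \<theta>\<in>{-h..0}. norm (\<phi> \<theta>))"

definition state :: "(real \<Rightarrow> 'a) \<Rightarrow> real \<Rightarrow> real \<Rightarrow> 'a" where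
  "state x t = (\<lambda>\<theta>. x (t + \<theta>))"

definition Lfun :: "(real \<Rightarrow> 'a::real_normed_vector \<Rightarrow>\<^sub>L 'a) \<Rightarrow> real \<Rightarrow> real \<Rightarrow> real \<Rightarrow> 'a \<Rightarrow>\<^sub>L 'a" where
  "Lfun B h t \<epsilon> = integral {0..t+h} (\<lambda>s. exp (- \<epsilon> * (t + h - s)) *\<^sub>R B s)"

definition omega :: "(real \<Rightarrow> 'a::real_normed_vector \<Rightarrow>\<^sub>L 'a) \<Rightarrow> real \<Rightarrow> real \<Rightarrow> real" where
  "omega B h \<epsilon> = (SUP t\<in>{0..}. \<epsilon> * norm (Lfun B h t \<epsilon>))"

definition S_alpha :: "real \<Rightarrow> real \<Rightarrow> (real \<Rightarrow> 'a::real_normed_vector) set" where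
  "S_alpha h \<alpha> = {\<phi>. \<forall>\<theta>\<in>{-h..0}. norm (\<phi> \<theta>) \<le> \<alpha> * norm (\<phi> 0)}"

text \<open>The Lyapunov--Krasovskii functional v(t,phi); DV is the gradient of V.\<close>
definition vfun ::
  "('a::euclidean_space \<Rightarrow> real) \<Rightarrow> ('a \<Rightarrow> 'a) \<Rightarrow> ('a \<Rightarrow> 'a \<Rightarrow> 'a) \<Rightarrow> (real \<Rightarrow> 'a \<Rightarrow>\<^sub>L 'a)
   \<Rightarrow> ('a \<Rightarrow> 'a \<Rightarrow> 'a) \<Rightarrow> real \<Rightarrow> real \<Rightarrow> real \<Rightarrow> real \<Rightarrow> real \<Rightarrow> real \<Rightarrow> real
   \<Rightarrow> (real \<Rightarrow> 'a) \<Rightarrow> real" where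
  "vfun V DV f B Q h \<epsilon> w1 w2 \<gamma> \<mu> t \<phi> =
     V (\<phi> 0)
     + DV (\<phi> 0) \<bullet> (integral {-h..0} (\<lambda>\<theta>. f (\<phi> 0) (\<phi> \<theta>) + blinfun_apply (B (t + \<theta> + h)) (Q (\<phi> 0) (\<phi> \<theta>)))
                     - blinfun_apply (Lfun B h t \<epsilon>) (Q (\<phi> 0) (\<phi> 0)))
     + integral {-h..0} (\<lambda>\<theta>. (w1 + (h + \<theta>) * w2) * norm (\<phi> \<theta>) powr (\<gamma> + \<mu> - 1))"

definition is_solution ::
  "('a::real_normed_vector \<Rightarrow> 'a \<Rightarrow> 'a) \<Rightarrow> (real \<Rightarrow> 'a \<Rightarrow>\<^sub>L 'a) \<Rightarrow> ('a \<Rightarrow> 'a \<Rightarrow> 'a) \<Rightarrow> real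
   \<Rightarrow> (real \<Rightarrow> 'a) \<Rightarrow> real \<Rightarrow> (real \<Rightarrow> 'a) \<Rightarrow> bool" where
  "is_solution f B Q h \<phi> T x \<longleftrightarrow>
     continuous_on {-h..<T} x \<and> (\<forall>\<theta>\<in>{-h..0}. x \<theta> = \<phi> \<theta>) \<and>
     (\<forall>t\<in>{0..<T}. (x has_vector_derivative
          (f (x t) (x (t - h)) + blinfun_apply (B t) (Q (x t) (x (t - h))))) (at t within {0..<T}))"

definition ode_solution :: "('a::real_normed_vector \<Rightarrow> 'a) \<Rightarrow> (real \<Rightarrow> 'a) \<Rightarrow> bool" where
  "ode_solution g y \<longleftrightarrow> (\<forall>t\<ge>0. (y has_vector_derivative g (y t)) (at t within {0..}))"

definition asymp_stable :: "('a::real_normed_vector \<Rightarrow> 'a) \<Rightarrow> bool" where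
  "asymp_stable g \<longleftrightarrow>
     (\<forall>e>0. \<exists>d>0. \<forall>y. ode_solution g y \<and> norm (y 0) < d \<longrightarrow> (\<forall>t\<ge>0. norm (y t) < e)) \<and>
     (\<exists>d>0. \<forall>y. ode_solution g y \<and> norm (y 0) < d \<longrightarrow> (y \<longlongrightarrow> 0) at_top)"

end

theory Submission imports Defs begin

lemma int_norm_le_const:
  fixes g :: "real \<Rightarrow> 'b::real_normed_vector"
  assumes "a \<le> b" "\<And>\<theta>. \<theta> \<in> {a..b} \<Longrightarrow> norm (g \<theta>) \<le> C"
  shows "norm (integral {a..b} g) \<le> C * (b - a)"
proof (cases "g integrable_on {a..b}")
  case True
  have C0: "0 \<le> C" using assms(2)[of a] assms(1) norm_ge_zero[of "g a"] by (meson atLeastAtMost_iff order.refl order_trans)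
  have "(g has_integral integral {a..b} g) (cbox a b)"
    using True by (simp add: integrable_integral)
  from has_integral_bound[OF C0 this] assms(2) assms(1) show ?thesis by auto
next
  case False
  have C0: "0 \<le> C" using assms(2)[of a] assms(1) norm_ge_zero[of "g a"] by (meson atLeastAtMost_iff order.refl order_trans)
  then show ?thesis using False assms(1) by (simp add: not_integrable_integral)
qed

lemma int_le_const:
  fixes g :: "real \<Rightarrow> real"
  assumes "a \<le> b" "\<And>\<theta>. \<theta> \<in> {a..b} \<Longrightarrow> g \<theta> \<le> C" "\<And>\<theta>. \<theta> \<in> {a..b} \<Longrightarrow> 0 \<le> g \<theta>"
  shows "integral {a..b} g \<le> C * (b - a)"
proof -
  have "norm (integral {a..b} g) \<le> C * (b - a)"
    by (rule int_norm_le_const) (use assms in auto)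
  then show ?thesis by simp
qed

lemma int_nonneg:
  fixes g :: "real \<Rightarrow> real"
  assumes "\<And>\<theta>. \<theta> \<in> {a..b} \<Longrightarrow> 0 \<le> g \<theta>"
  shows "0 \<le> integral {a..b} g"
proof (cases "g integrable_on {a..b}")
  case True then show ?thesis using integral_nonneg assms by blast
next
  case False then show ?thesis by (simp add: not_integrable_integral)
qed

lemma powr_tangent:
  fixes y C p :: real
  assumes "0 \<le> y" "0 < C" "1 \<le> p"
  shows "C powr p + p * C powr (p - 1) * (y - C) \<le> y powr p"
proof (cases "y = 0")
  case True
  have "C powr p = C powr (p - 1) * C" using powr_add[of C "p-1" 1] assms by simp
  then have "C powr p + p * C powr (p-1) * (y - C) = (1 - p) * (C powr (p-1) * C)"
    using True by (simp add: algebra_simps)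
  moreover have "0 \<le> C powr (p-1) * C" using assms by simp
  ultimately have "C powr p + p * C powr (p-1) * (y - C) \<le> 0"
    using assms(3) by (simp add: mult_nonpos_nonneg)
  then show ?thesis using True by simp
next
  case False
  have "y powr p - C powr p \<ge> p * C powr (p - 1) * (y - C)"
    by (rule convex_on_imp_above_tangent[OF powr_convex[OF assms(3)]])
       (use assms False in \<open>auto simp: interior_open intro!: has_field_derivative_at_within has_real_derivative_powr\<close>)
  then show ?thesis by simp
qed

lemma powr_sum_le:
  fixes x y p :: real
  assumes "0 \<le> x" "0 \<le> y" "1 \<le> p"
  shows "(x + y) powr p \<le> 2 powr (p - 1) * (x powr p + y powr p)"
proof (cases "x + y = 0")
  case True then show ?thesis using assms by simp
next
  case False
  define C where "C = (x + y) / 2"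
  have C: "0 < C" using False assms by (simp add: C_def)
  have 1: "C powr p + p * C powr (p - 1) * (x - C) \<le> x powr p" by (rule powr_tangent) (use assms C in auto)
  have 2: "C powr p + p * C powr (p - 1) * (y - C) \<le> y powr p" by (rule powr_tangent) (use assms C in auto)
  have e: "p * C powr (p - 1) * (x - C) + p * C powr (p - 1) * (y - C) = p * C powr (p-1) * ((x - C) + (y - C))"
    by (simp add: algebra_simps)
  have "(x - C) + (y - C) = 0" by (simp add: C_def)
  then have "2 * C powr p \<le> x powr p + y powr p" using 1 2 e by simp
  moreover have "(x + y) powr p = 2 powr p * C powr p"
  proof -
    have "x + y = 2 * C" by (simp add: C_def)
    then show ?thesis using C by (simp add: powr_mult)
  qed
  moreover have "2 powr p = 2 powr (p - 1) * 2" using powr_add[of 2 "p-1" 1] by simp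
  ultimately have "(x + y) powr p = 2 powr (p - 1) * (2 * C powr p)" "2 * C powr p \<le> x powr p + y powr p"
    by simp_all
  then show ?thesis using mult_left_mono[of "2 * C powr p" "x powr p + y powr p" "2 powr (p - 1)"]
    by simp
qed

lemma int_jensen:
  fixes G :: "real \<Rightarrow> real" and h p :: real
  assumes h: "0 < h" and p: "1 \<le> p" and Gc: "continuous_on {-h..0} G"
    and G0: "\<And>\<theta>. \<theta> \<in> {-h..0} \<Longrightarrow> 0 \<le> G \<theta>"
  shows "(integral {-h..0} G) powr p \<le> h powr (p - 1) * integral {-h..0} (\<lambda>\<theta>. G \<theta> powr p)"
proof -
  define I where "I = integral {-h..0} G"
  define J where "J = integral {-h..0} (\<lambda>\<theta>. G \<theta> powr p)"
  have J0: "0 \<le> J" unfolding J_def by (rule int_nonneg) simp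
  have I0: "0 \<le> I" unfolding I_def by (rule int_nonneg) (use G0 in auto)
  show ?thesis
  proof (cases "I = 0")
    case True then show ?thesis using J0 p by (simp add: I_def[symmetric] J_def[symmetric])
  next
    case False
    define C where "C = I / h"
    have C: "0 < C" using False I0 h by (simp add: C_def)
    have GI: "(G has_integral I) {-h..0}"
      unfolding I_def using integrable_continuous_interval[OF Gc] by (simp add: integrable_integral)
    have Gpc: "continuous_on {-h..0} (\<lambda>\<theta>. G \<theta> powr p)"
      by (rule continuous_on_powr') (use Gc G0 p in auto)
    have GJ: "((\<lambda>\<theta>. G \<theta> powr p) has_integral J) {-h..0}"
      unfolding J_def using integrable_continuous_interval[OF Gpc] by (simp add: integrable_integral)
    have LI: "((\<lambda>\<theta>. C powr p + p * C powr (p - 1) * (G \<theta> - C)) has_integral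
               (h * C powr p + p * C powr (p - 1) * (I - h * C))) {-h..0}"
    proof -
      have "((\<lambda>\<theta>. G \<theta> - C) has_integral (I - h * C)) {-h..0}"
        using has_integral_diff[OF GI has_integral_const_real[of C "-h" 0]] h by simp
      then have "((\<lambda>\<theta>. p * C powr (p - 1) * (G \<theta> - C)) has_integral (p * C powr (p - 1) * (I - h * C))) {-h..0}"
        by (rule has_integral_mult_right)
      from has_integral_add[OF has_integral_const_real[of "C powr p" "-h" 0] this] h
      show ?thesis by simp
    qed
    have "h * C powr p + p * C powr (p - 1) * (I - h * C) \<le> J"
      by (rule has_integral_le[OF LI GJ]) (use powr_tangent G0 C p in auto)
    then have "h * C powr p \<le> J" using h by (simp add: C_def)
    moreover have "h * C powr p = I powr p / h powr (p - 1)"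
    proof -
      have "C powr p = I powr p / h powr p" using I0 h by (simp add: C_def powr_divide)
      moreover have "h powr p = h powr (p - 1) * h" using powr_add[of h "p-1" 1] h by simp
      ultimately show ?thesis using h by (simp add: field_simps)
    qed
    ultimately have "I powr p / h powr (p - 1) \<le> J" by simp
    then show ?thesis using h by (simp add: I_def[symmetric] J_def[symmetric] divide_le_eq mult.commute)
  qed
qed

lemma compare:
  fixes D D' :: "real \<Rightarrow> real"
  assumes ab: "a \<le> b"
    and der: "\<And>s. s \<in> {a..b} \<Longrightarrow> (D has_real_derivative D' s) (at s within {a..b})"
    and Da: "D a \<le> 0"
    and neg: "\<And>s. s \<in> {a..b} \<Longrightarrow> D s > 0 \<Longrightarrow> D' s < 0"
  shows "D b \<le> 0"
proof (rule ccontr)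
  assume Db: "\<not> D b \<le> 0"
  have cont: "continuous_on {a..b} D"
    using der by (meson DERIV_continuous continuous_on_eq_continuous_within)
  define S where "S = {s \<in> {a..b}. D s \<le> (\<lambda>_. 0) s}"
  have cS: "closed S" unfolding S_def
    by (rule continuous_on_closed_Collect_le[OF cont]) auto
  have aS: "a \<in> S" using ab Da by (simp add: S_def)
  have bdd: "bdd_above S" unfolding S_def by (auto intro: bdd_aboveI[of _ b])
  define s0 where "s0 = Sup S"
  have s0S: "s0 \<in> S" unfolding s0_def using closed_contains_Sup[OF _ bdd cS] aS by auto
  have s0le: "s0 \<le> b" using s0S by (simp add: S_def)
  have s0b: "s0 < b" using s0le s0S Db by (cases "s0 = b") (auto simp: S_def)
  have pos: "D s > 0" if "s0 < s" "s \<le> b" for s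
  proof (rule ccontr)
    assume "\<not> D s > 0"
    then have "s \<in> S" using that s0S by (auto simp: S_def)
    then have "s \<le> s0" unfolding s0_def using bdd by (rule cSup_upper)
    then show False using that by simp
  qed
  have "\<exists>x\<in>{s0<..<b}. D b - D s0 = (\<lambda>x. (*) (D' x)) x (b - s0)"
  proof (rule mvt_simple[OF s0b])
    fix x assume x: "s0 \<le> x" "x \<le> b"
    have "a \<le> s0" using s0S by (simp add: S_def)
    then have "(D has_real_derivative D' x) (at x within {s0..b})"
      using der[of x] x by (auto intro: DERIV_subset)
    then show "(D has_derivative (*) (D' x)) (at x within {s0..b})"
      by (simp add: has_field_derivative_def)
  qed
  then obtain x where x: "s0 < x" "x < b" "D b - D s0 = D' x * (b - s0)" by auto
  have "a \<le> s0" using s0S by (simp add: S_def)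
  then have "D' x < 0" using neg[of x] pos[of x] x by auto
  then have "D b - D s0 < 0" using x s0b by (simp add: mult_neg_pos)
  moreover have "D s0 \<le> 0" using s0S by (simp add: S_def)
  ultimately show False using Db by simp
qed


theorem theorem3:
  fixes f :: "'a::euclidean_space \<Rightarrow> 'a \<Rightarrow> 'a"
    and f1 f2 :: "'a \<Rightarrow> 'a \<Rightarrow> 'a \<Rightarrow>\<^sub>L 'a"
    and B :: "real \<Rightarrow> 'a \<Rightarrow>\<^sub>L 'a"
    and Q :: "'a \<Rightarrow> 'a \<Rightarrow> 'a"
    and Q1 Q2 :: "'a \<Rightarrow> 'a \<Rightarrow> 'a \<Rightarrow>\<^sub>L 'a"
    and V :: "'a \<Rightarrow> real" and DV :: "'a \<Rightarrow> 'a" and D2V :: "'a \<Rightarrow> 'a \<Rightarrow>\<^sub>L 'a"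
    and h \<mu> \<sigma> \<gamma> m1 m2 \<eta>11 \<eta>12 bhat p1 p2 q11 q12 q21 q22 w \<alpha>0 \<alpha>1 \<beta> \<psi> w1 w2 \<epsilon> l0 kap
        \<alpha> \<delta> c0 c1 c2 a1 b0 b1 \<Delta> \<rho>t b2 b3 b c K \<rho> m p c1hat c2hat :: real
  assumes h_pos: "h > 0"
    (* (i) *)
    and f_loclip: "\<forall>r>0. \<exists>L. \<forall>a b a' b'. norm (a, b) \<le> r \<and> norm (a', b') \<le> r \<longrightarrow>
                      norm (f a b - f a' b') \<le> L * norm ((a, b) - (a', b'))"
    and f1_deriv: "\<And>a b. ((\<lambda>y. f y b) has_derivative blinfun_apply (f1 a b)) (at a)"
    and f2_deriv: "\<And>a b. ((\<lambda>y. f a y) has_derivative blinfun_apply (f2 a b)) (at b)"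
    and f1_cont: "continuous_on UNIV (\<lambda>z. f1 (fst z) (snd z))"
    and f2_cont: "continuous_on UNIV (\<lambda>z. f2 (fst z) (snd z))"
    and mu_gt: "\<mu> > 1"
    and f_hom: "\<And>c a b. c > 0 \<Longrightarrow> f (c *\<^sub>R a) (c *\<^sub>R b) = c powr \<mu> *\<^sub>R f a b"
    and m_nonneg: "m1 \<ge> 0" "m2 \<ge> 0" "\<eta>11 \<ge> 0" "\<eta>12 \<ge> 0"
    and f_bound: "\<And>a b. norm (f a b) \<le> m1 * norm a powr \<mu> + m2 * norm b powr \<mu>"
    and f1_bound: "\<And>a b. norm (f1 a b) \<le> \<eta>11 * norm a powr (\<mu> - 1) + \<eta>12 * norm b powr (\<mu> - 1)"
    (* (ii) *)
    and B_cont: "continuous_on {0..} B"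
    and B_bound: "\<And>t. t \<ge> 0 \<Longrightarrow> norm (B t) \<le> bhat"
    (* (iii) *)
    and Q1_deriv: "\<And>a b. ((\<lambda>y. Q y b) has_derivative blinfun_apply (Q1 a b)) (at a)"
    and Q2_deriv: "\<And>a b. ((\<lambda>y. Q a y) has_derivative blinfun_apply (Q2 a b)) (at b)"
    and Q1_cont: "continuous_on UNIV (\<lambda>z. Q1 (fst z) (snd z))"
    and Q2_cont: "continuous_on UNIV (\<lambda>z. Q2 (fst z) (snd z))"
    and sigma_gt: "\<sigma> > 1"
    and p_nonneg: "p1 \<ge> 0" "p2 \<ge> 0" "q11 \<ge> 0" "q12 \<ge> 0" "q21 \<ge> 0" "q22 \<ge> 0"
    and Q_bound: "\<And>a b. norm (Q a b) \<le> p1 * norm a powr \<sigma> + p2 * norm b powr \<sigma>"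
    and Q1_bound: "\<And>a b. norm (Q1 a b) \<le> q11 * norm a powr (\<sigma> - 1) + q12 * norm b powr (\<sigma> - 1)"
    and Q2_bound: "\<And>a b. norm (Q2 a b) \<le> q21 * norm a powr (\<sigma> - 1) + q22 * norm b powr (\<sigma> - 1)"
    (* (iv) *)
    and stable: "asymp_stable (\<lambda>y. f y y)"
    and gamma_ge: "\<gamma> \<ge> 2"
    and V_deriv: "\<And>z. (V has_derivative (\<lambda>k. DV z \<bullet> k)) (at z)"
    and DV_deriv: "\<And>z. (DV has_derivative blinfun_apply (D2V z)) (at z)"
    and D2V_cont: "continuous_on UNIV D2V"
    and V_posdef: "V 0 = 0" "\<And>z. z \<noteq> 0 \<Longrightarrow> V z > 0"
    and V_hom: "\<And>c z. c > 0 \<Longrightarrow> V (c *\<^sub>R z) = c powr \<gamma> * V z"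
    and consts_pos: "w > 0" "\<alpha>0 > 0" "\<alpha>1 > 0" "\<beta> > 0" "\<psi> > 0"
    and V_lyap: "\<And>z. DV z \<bullet> f z z \<le> - w * norm z powr (\<gamma> + \<mu> - 1)"
    and V_bounds: "\<And>z. \<alpha>0 * norm z powr \<gamma> \<le> V z" "\<And>z. V z \<le> \<alpha>1 * norm z powr \<gamma>"
    and DV_bound: "\<And>z. norm (DV z) \<le> \<beta> * norm z powr (\<gamma> - 1)"
    and D2V_bound: "\<And>z. z \<noteq> 0 \<Longrightarrow> norm (D2V z) \<le> \<psi> * norm z powr (\<gamma> - 2)"
    (* perturbation classes (a) / (b) and the constant standing for omega(eps)/eps *)
    and cases_ab:
      "((\<exists>M. \<forall>t\<ge>0. norm (integral {0..t} B) \<le> M) \<and> \<sigma> > (\<mu> + 1) / 2 \<and>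
          \<epsilon> = 0 \<and> l0 > 0 \<and> (\<forall>t\<ge>0. norm (Lfun B h t 0) \<le> l0) \<and> kap = l0)
       \<or> ((\<forall>e>0. \<exists>T0. \<forall>T\<ge>T0. \<forall>t\<ge>0. norm ((1 / T) *\<^sub>R integral {t..t+T} B) < e) \<and> \<sigma> \<ge> \<mu> \<and>
          \<epsilon> > 0 \<and> kap = omega B h \<epsilon> / \<epsilon>)"
    and w12: "w1 > 0" "w2 > 0" "w - w1 - h * w2 > 0"
    (* constants of the theorem *)
    and alpha_gt: "\<alpha> > 1"
    and consts2: "\<delta> > 0" "c0 > 0" "c1 > 0" "c2 > 0" "a1 > 0" "b0 > 0" "b1 > 0"
    and L1: "\<forall>\<phi> T x. continuous_on {-h..0} \<phi> \<and> T > 0 \<and> is_solution f B Q h \<phi> T x \<longrightarrow>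
               (\<forall>t\<in>{0..<T}. hnorm h (state x t) \<le> \<delta> \<longrightarrow>
                  (\<exists>D. ((\<lambda>s. vfun V DV f B Q h \<epsilon> w1 w2 \<gamma> \<mu> s (state x s)) has_real_derivative D)
                          (at t within {0..<T}) \<and>
                       D \<le> - c0 * norm (x t) powr (\<gamma> + \<mu> - 1) - c1 * norm (x (t - h)) powr (\<gamma> + \<mu> - 1)
                            - c2 * integral {-h..0} (\<lambda>\<theta>. norm (x (t + \<theta>)) powr (\<gamma> + \<mu> - 1))))"
    and L2: "\<forall>t\<ge>0. \<forall>\<phi>. continuous_on {-h..0} \<phi> \<and> \<phi> \<in> S_alpha h \<alpha> \<and> hnorm h \<phi> \<le> \<delta> \<longrightarrow>
               vfun V DV f B Q h \<epsilon> w1 w2 \<gamma> \<mu> t \<phi>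
                 \<ge> a1 * norm (\<phi> 0) powr \<gamma> + w1 * integral {-h..0} (\<lambda>\<theta>. norm (\<phi> \<theta>) powr (\<gamma> + \<mu> - 1))"
    and L3: "\<forall>t\<ge>0. \<forall>\<phi>. continuous_on {-h..0} \<phi> \<and> hnorm h \<phi> \<le> \<delta> \<longrightarrow>
               vfun V DV f B Q h \<epsilon> w1 w2 \<gamma> \<mu> t \<phi>
                 \<le> b0 * norm (\<phi> 0) powr \<gamma> + b1 * integral {-h..0} (\<lambda>\<theta>. norm (\<phi> \<theta>) powr \<gamma>)"
    and m_def: "m = m1 + m2" and p_def: "p = p1 + p2"
    and b2_def: "b2 = (\<beta> * m + w1 + h * w2) * h"
    and b3_def: "b3 = \<beta> * p * (bhat * h + kap)"
    and Delta_pos: "\<Delta> > 0"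
    and Delta_root: "\<alpha>1 * \<Delta> powr \<gamma> + b2 * \<Delta> powr (\<gamma> + \<mu> - 1) + b3 * \<Delta> powr (\<gamma> + \<sigma> - 1) = a1 * \<delta> powr \<gamma>"
    and b_def: "b = max b0 b1" and c_def: "c = min c0 c2"
    and K_def: "K = \<alpha>1 + b2 * \<Delta> powr (\<mu> - 1) + b3 * \<Delta> powr (\<sigma> - 1)"
    and rho_def: "\<rho> = c / (b powr ((\<gamma> + \<mu> - 1) / \<gamma>) * (2 * max 1 h) powr ((\<mu> - 1) / \<gamma>))"
    and rhot: "0 < \<rho>t" "\<rho>t < \<rho>"
    and rhot_ineq: "1 + \<rho>t * h * ((\<mu> - 1) / \<gamma>) * K powr ((\<mu> - 1) / \<gamma>) * \<Delta> powr (\<mu> - 1) \<le> \<alpha> powr (\<mu> - 1)"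
    and c1hat_def: "c1hat = (K / a1) powr (1 / \<gamma>)"
    and c2hat_def: "c2hat = \<rho>t * ((\<mu> - 1) / \<gamma>) * K powr ((\<mu> - 1) / \<gamma>)"
  shows "\<forall>\<phi> T x. continuous_on {-h..0} \<phi> \<and> hnorm h \<phi> < \<Delta> \<and> T > 0 \<and> is_solution f B Q h \<phi> T x \<longrightarrow>
           (\<forall>t\<in>{0..<T}. norm (x t)
               \<le> c1hat * hnorm h \<phi> * (1 + c2hat * hnorm h \<phi> powr (\<mu> - 1) * t) powr (- 1 / (\<mu> - 1)))"
proof -
  have g0: "\<gamma> > 0" using gamma_ge by simp
  define k where "k = (\<mu> - 1) / \<gamma>"
  define pp where "pp = (\<gamma> + \<mu> - 1) / \<gamma>"
  have k0: "k > 0" using mu_gt g0 by (simp add: k_def)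
  have pp_eq: "pp = 1 + k" using g0 by (simp add: pp_def k_def field_simps)
  have gk: "\<gamma> * k = \<mu> - 1" using g0 by (simp add: k_def)
  have bhat0: "bhat \<ge> 0" using B_bound[of 0] norm_ge_zero[of "B 0"] by linarith
  have Lb: "\<forall>t\<ge>0. norm (Lfun B h t \<epsilon>) \<le> kap"
  proof (cases "\<epsilon> = 0 \<and> kap = l0 \<and> (\<forall>t\<ge>0. norm (Lfun B h t 0) \<le> l0)")
    case True then show ?thesis by simp
  next
    case False
    then have eps: "\<epsilon> > 0" and kapd: "kap = omega B h \<epsilon> / \<epsilon>" using cases_ab by auto
    have one: "\<epsilon> * norm (Lfun B h t \<epsilon>) \<le> bhat" if t: "t \<ge> 0" for t
    proof -
      let ?F = "\<lambda>s. exp (- \<epsilon> * (t + h - s)) *\<^sub>R B s"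
      have cF: "continuous_on {0..t+h} ?F"
        by (intro continuous_intros continuous_on_subset[OF B_cont]) auto
      have der: "((\<lambda>s. bhat * exp (- \<epsilon> * (t + h - s)) / \<epsilon>) has_vector_derivative bhat * exp (- \<epsilon> * (t + h - s))) (at s within {0..t+h})" for s
        using eps by (auto intro!: derivative_eq_intros simp: has_real_derivative_iff_has_vector_derivative[symmetric])
      have gI: "((\<lambda>s. bhat * exp (- \<epsilon> * (t + h - s))) has_integral
                  (bhat * exp (- \<epsilon> * (t + h - (t+h))) / \<epsilon> - bhat * exp (- \<epsilon> * (t + h - 0)) / \<epsilon>)) {0..t+h}"
        by (rule fundamental_theorem_of_calculus) (use t h_pos der in auto)
      have "norm (Lfun B h t \<epsilon>) \<le> integral {0..t+h} (\<lambda>s. bhat * exp (- \<epsilon> * (t + h - s)))"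
        unfolding Lfun_def
        by (rule integral_norm_bound_integral[OF integrable_continuous_interval[OF cF]])
           (use gI B_bound in \<open>auto intro: has_integral_integrable mult_right_mono\<close>)
      also have "\<dots> = bhat / \<epsilon> - bhat * exp (- \<epsilon> * (t + h)) / \<epsilon>"
        using integral_unique[OF gI] by simp
      also have "\<dots> \<le> bhat / \<epsilon>" using bhat0 eps by simp
      finally show ?thesis using eps by (simp add: field_simps)
    qed
    have bdd: "bdd_above ((\<lambda>t. \<epsilon> * norm (Lfun B h t \<epsilon>)) ` {0..})"
      using one by (auto intro: bdd_aboveI[of _ bhat])
    show ?thesis
    proof (intro allI impI)
      fix t :: real assume t: "t \<ge> 0"
      have "\<epsilon> * norm (Lfun B h t \<epsilon>) \<le> omega B h \<epsilon>"
        unfolding omega_def by (rule cSUP_upper[OF _ bdd]) (use t in auto)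
      then have "\<epsilon> * norm (Lfun B h t \<epsilon>) \<le> \<epsilon> * kap" using eps kapd by simp
      then show "norm (Lfun B h t \<epsilon>) \<le> kap" using eps by (simp add: mult_le_cancel_left_pos)
    qed
  qed
  have kap0: "kap \<ge> 0" using Lb norm_ge_zero order_trans by blast
  have m0: "m \<ge> 0" and p0: "p \<ge> 0" using m_nonneg p_nonneg m_def p_def by auto
  have b2_0: "b2 \<ge> 0" using b2_def m0 consts_pos w12 h_pos by simp
  have b3_0: "b3 \<ge> 0" using b3_def p0 consts_pos bhat0 kap0 h_pos by simp
  have K0: "K \<ge> \<alpha>1" using K_def b2_0 b3_0 by simp
  have Kp: "K > 0" using K0 consts_pos by simp
  have hn_bdd: "bdd_above ((\<lambda>\<theta>. norm (\<psi> \<theta>)) ` {-h..0})" if "continuous_on {-h..0} \<psi>" for \<psi> :: "real \<Rightarrow> 'a"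
  proof -
    have "compact ((\<lambda>\<theta>. norm (\<psi> \<theta>)) ` {-h..0})"
      by (intro compact_continuous_image continuous_intros that) simp
    then show ?thesis by (simp add: bounded_imp_bdd_above compact_imp_bounded)
  qed
  have hn_ge: "norm (\<psi> \<theta>) \<le> hnorm h \<psi>" if "continuous_on {-h..0} \<psi>" "\<theta> \<in> {-h..0}" for \<psi> :: "real \<Rightarrow> 'a" and \<theta>
    unfolding hnorm_def by (rule cSUP_upper[OF that(2) hn_bdd[OF that(1)]])
  have hn_le: "hnorm h \<psi> \<le> M" if "\<And>\<theta>. \<theta> \<in> {-h..0} \<Longrightarrow> norm (\<psi> \<theta>) \<le> M" for \<psi> :: "real \<Rightarrow> 'a" and M
    unfolding hnorm_def by (rule cSUP_least) (use that h_pos in auto)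
  have z0: "(0::real) \<in> {-h..0}" using h_pos by simp
  have vupper: "vfun V DV f B Q h \<epsilon> w1 w2 \<gamma> \<mu> t \<psi> \<le> K * hnorm h \<psi> powr \<gamma>"
    if t0: "t \<ge> 0" and cpsi: "continuous_on {-h..0} \<psi>" and HD: "hnorm h \<psi> \<le> \<Delta>" for t \<psi>
  proof -
    define H where "H = hnorm h \<psi>"
    define a0 where "a0 = norm (\<psi> 0)"
    have nb: "norm (\<psi> \<theta>) \<le> H" if "\<theta> \<in> {-h..0}" for \<theta> using hn_ge[OF cpsi that] by (simp add: H_def)
    have a0H: "a0 \<le> H" using nb[OF z0] by (simp add: a0_def)
    have a00: "0 \<le> a0" by (simp add: a0_def)
    have H0: "0 \<le> H" using a0H a00 by simp
    have pm: "\<And>e. e \<ge> 0 \<Longrightarrow> a0 powr e \<le> H powr e" using a0H a00 by (simp add: powr_mono2)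
    have pm2: "\<And>e \<theta>. e \<ge> 0 \<Longrightarrow> \<theta> \<in> {-h..0} \<Longrightarrow> norm (\<psi> \<theta>) powr e \<le> H powr e"
      using nb by (simp add: powr_mono2)
    have T1: "V (\<psi> 0) \<le> \<alpha>1 * H powr \<gamma>"
      using V_bounds(2)[of "\<psi> 0"] pm[of \<gamma>] consts_pos g0 by (simp add: a0_def) (smt (verit) mult_left_mono)
    have fb: "norm (f (\<psi> 0) (\<psi> \<theta>)) \<le> m * H powr \<mu>" if "\<theta> \<in> {-h..0}" for \<theta>
    proof -
      have "m1 * a0 powr \<mu> + m2 * norm (\<psi> \<theta>) powr \<mu> \<le> m1 * H powr \<mu> + m2 * H powr \<mu>"
        using pm[of \<mu>] pm2[of \<mu> \<theta>] that m_nonneg mu_gt by (intro add_mono mult_left_mono) auto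
      then show ?thesis using f_bound[of "\<psi> 0" "\<psi> \<theta>"] m_def by (simp add: a0_def algebra_simps)
    qed
    have qb: "norm (Q (\<psi> 0) (\<psi> \<theta>)) \<le> p * H powr \<sigma>" if "\<theta> \<in> {-h..0}" for \<theta>
    proof -
      have "p1 * a0 powr \<sigma> + p2 * norm (\<psi> \<theta>) powr \<sigma> \<le> p1 * H powr \<sigma> + p2 * H powr \<sigma>"
        using pm[of \<sigma>] pm2[of \<sigma> \<theta>] that p_nonneg sigma_gt by (intro add_mono mult_left_mono) auto
      then show ?thesis using Q_bound[of "\<psi> 0" "\<psi> \<theta>"] p_def by (simp add: a0_def algebra_simps)
    qed
    have bqb: "norm (blinfun_apply (B (t + \<theta> + h)) (Q (\<psi> 0) (\<psi> \<theta>))) \<le> bhat * (p * H powr \<sigma>)"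
      if "\<theta> \<in> {-h..0}" for \<theta>
    proof -
      have "norm (B (t + \<theta> + h)) \<le> bhat" using B_bound that t0 by auto
      then show ?thesis using norm_blinfun[of "B (t + \<theta> + h)" "Q (\<psi> 0) (\<psi> \<theta>)"] qb[OF that]
        by (smt (verit) mult_mono norm_ge_zero)
    qed
    have nX1: "norm (integral {-h..0} (\<lambda>\<theta>. f (\<psi> 0) (\<psi> \<theta>) + blinfun_apply (B (t + \<theta> + h)) (Q (\<psi> 0) (\<psi> \<theta>))))
               \<le> (m * H powr \<mu> + bhat * (p * H powr \<sigma>)) * h"
      using int_norm_le_const[of "-h" 0 "\<lambda>\<theta>. f (\<psi> 0) (\<psi> \<theta>) + blinfun_apply (B (t + \<theta> + h)) (Q (\<psi> 0) (\<psi> \<theta>))"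
                                 "m * H powr \<mu> + bhat * (p * H powr \<sigma>)"]
      h_pos fb bqb by (simp add: norm_triangle_le add_mono)
    have nX2: "norm (blinfun_apply (Lfun B h t \<epsilon>) (Q (\<psi> 0) (\<psi> 0))) \<le> kap * (p * H powr \<sigma>)"
      using norm_blinfun[of "Lfun B h t \<epsilon>" "Q (\<psi> 0) (\<psi> 0)"] qb[OF z0] Lb t0
      by (smt (verit) mult_mono norm_ge_zero)
    define X where "X = integral {-h..0} (\<lambda>\<theta>. f (\<psi> 0) (\<psi> \<theta>) + blinfun_apply (B (t + \<theta> + h)) (Q (\<psi> 0) (\<psi> \<theta>)))
                     - blinfun_apply (Lfun B h t \<epsilon>) (Q (\<psi> 0) (\<psi> 0))"
    have nX: "norm X \<le> (m * H powr \<mu> + bhat * (p * H powr \<sigma>)) * h + kap * (p * H powr \<sigma>)"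
      unfolding X_def using nX1 nX2 norm_triangle_ineq4 by (smt (verit))
    have dvb: "norm (DV (\<psi> 0)) \<le> \<beta> * H powr (\<gamma> - 1)"
      using DV_bound[of "\<psi> 0"] pm[of "\<gamma> - 1"] gamma_ge consts_pos by (simp add: a0_def) (smt (verit) mult_left_mono)
    have T2: "DV (\<psi> 0) \<bullet> X \<le> \<beta> * H powr (\<gamma> - 1) * ((m * H powr \<mu> + bhat * (p * H powr \<sigma>)) * h + kap * (p * H powr \<sigma>))"
      using norm_cauchy_schwarz[of "DV (\<psi> 0)" X] dvb nX by (smt (verit) mult_mono norm_ge_zero)
    have T3: "integral {-h..0} (\<lambda>\<theta>. (w1 + (h + \<theta>) * w2) * norm (\<psi> \<theta>) powr (\<gamma> + \<mu> - 1))
               \<le> ((w1 + h * w2) * H powr (\<gamma> + \<mu> - 1)) * h"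
    proof -
      have "integral {-h..0} (\<lambda>\<theta>. (w1 + (h + \<theta>) * w2) * norm (\<psi> \<theta>) powr (\<gamma> + \<mu> - 1))
               \<le> ((w1 + h * w2) * H powr (\<gamma> + \<mu> - 1)) * (0 - - h)"
      proof (rule int_le_const)
        fix \<theta> :: real assume th: "\<theta> \<in> {-h..0}"
        then have "0 \<le> w1 + (h + \<theta>) * w2" "w1 + (h + \<theta>) * w2 \<le> w1 + h * w2" using w12 by auto
        moreover have "norm (\<psi> \<theta>) powr (\<gamma> + \<mu> - 1) \<le> H powr (\<gamma> + \<mu> - 1)" using pm2[OF _ th] g0 mu_gt by simp
        ultimately show "(w1 + (h + \<theta>) * w2) * norm (\<psi> \<theta>) powr (\<gamma> + \<mu> - 1) \<le> (w1 + h * w2) * H powr (\<gamma> + \<mu> - 1)"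
          by (simp add: mult_mono)
        show "0 \<le> (w1 + (h + \<theta>) * w2) * norm (\<psi> \<theta>) powr (\<gamma> + \<mu> - 1)" using th w12 by auto
      qed (use h_pos in simp)
      then show ?thesis by simp
    qed
    define G where "G = H powr \<gamma>"
    define P1 where "P1 = H powr (\<mu> - 1)"
    define P2 where "P2 = H powr (\<sigma> - 1)"
    have e1: "H powr (\<gamma> - 1) * H powr \<mu> = P1 * G" unfolding P1_def G_def
      by (simp add: powr_add[symmetric] algebra_simps)
    have e2: "H powr (\<gamma> - 1) * H powr \<sigma> = P2 * G" unfolding P2_def G_def
      by (simp add: powr_add[symmetric] algebra_simps)
    have e3: "H powr (\<gamma> + \<mu> - 1) = P1 * G" unfolding P1_def G_def
      by (simp add: powr_add[symmetric] algebra_simps)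
    have sum: "vfun V DV f B Q h \<epsilon> w1 w2 \<gamma> \<mu> t \<psi> \<le> (\<alpha>1 + b2 * P1 + b3 * P2) * G"
    proof -
      have "vfun V DV f B Q h \<epsilon> w1 w2 \<gamma> \<mu> t \<psi> \<le> \<alpha>1 * H powr \<gamma> +
             \<beta> * H powr (\<gamma> - 1) * ((m * H powr \<mu> + bhat * (p * H powr \<sigma>)) * h + kap * (p * H powr \<sigma>))
             + ((w1 + h * w2) * H powr (\<gamma> + \<mu> - 1)) * h"
        unfolding vfun_def using T1 T2 T3 by (simp add: X_def)
      also have "\<dots> = \<alpha>1 * G + \<beta> * m * h * (H powr (\<gamma> - 1) * H powr \<mu>) + \<beta> * p * (bhat * h + kap) * (H powr (\<gamma> - 1) * H powr \<sigma>)
             + (w1 + h * w2) * h * H powr (\<gamma> + \<mu> - 1)"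
        by (simp add: G_def algebra_simps)
      also have "\<dots> = (\<alpha>1 + b2 * P1 + b3 * P2) * G"
        unfolding e1 e2 e3 b2_def b3_def by (simp add: algebra_simps)
      finally show ?thesis .
    qed
    have "P1 \<le> \<Delta> powr (\<mu> - 1)" "P2 \<le> \<Delta> powr (\<sigma> - 1)"
      unfolding P1_def P2_def using HD H0 mu_gt sigma_gt by (auto simp: H_def intro: powr_mono2)
    then have "(\<alpha>1 + b2 * P1 + b3 * P2) * G \<le> K * G"
      unfolding K_def G_def using b2_0 b3_0 by (intro mult_right_mono add_mono) (auto intro: mult_left_mono)
    then show ?thesis using sum by (simp add: G_def H_def)
  qed
  have a1K: "a1 \<le> K"
  proof -
    obtain u :: 'a where u: "u \<in> Basis" using nonempty_Basis by blast
    define sz where "sz = min \<Delta> \<delta>"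
    have sz: "sz > 0" using Delta_pos consts2 by (simp add: sz_def)
    define \<phi>c :: "real \<Rightarrow> 'a" where "\<phi>c = (\<lambda>_. sz *\<^sub>R u)"
    have nu: "norm (sz *\<^sub>R u) = sz" using u sz by simp
    have c: "continuous_on {-h..0} \<phi>c" by (simp add: \<phi>c_def)
    have hn: "hnorm h \<phi>c = sz"
      unfolding hnorm_def \<phi>c_def nu using h_pos by simp
    have Sa: "\<phi>c \<in> S_alpha h \<alpha>" using alpha_gt sz nu by (simp add: S_alpha_def \<phi>c_def)
    have "vfun V DV f B Q h \<epsilon> w1 w2 \<gamma> \<mu> 0 \<phi>c \<ge> a1 * norm (\<phi>c 0) powr \<gamma> + w1 * integral {-h..0} (\<lambda>\<theta>. norm (\<phi>c \<theta>) powr (\<gamma> + \<mu> - 1))"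
      using L2 c Sa hn by (simp add: sz_def)
    moreover have "0 \<le> integral {-h..0} (\<lambda>\<theta>. norm (\<phi>c \<theta>) powr (\<gamma> + \<mu> - 1))" by (rule int_nonneg) simp
    moreover have "vfun V DV f B Q h \<epsilon> w1 w2 \<gamma> \<mu> 0 \<phi>c \<le> K * sz powr \<gamma>"
      using vupper[of 0 \<phi>c] c hn by (simp add: sz_def)
    moreover have "norm (\<phi>c 0) = sz" unfolding \<phi>c_def by (rule nu)
    ultimately have "a1 * sz powr \<gamma> \<le> K * sz powr \<gamma>" using w12(1)
      by (smt (verit) mult_nonneg_nonneg)
    then show ?thesis using sz by simp
  qed
  have c1hat1: "c1hat \<ge> 1" unfolding c1hat_def using a1K consts2 g0 by (simp add: ge_one_powr_ge_zero)
  have c1hatD: "c1hat * \<Delta> = \<delta>"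
  proof -
    have KD: "K * \<Delta> powr \<gamma> = a1 * \<delta> powr \<gamma>"
      unfolding K_def Delta_root[symmetric] using Delta_pos
      by (simp add: algebra_simps powr_add[symmetric])
    have "(c1hat * \<Delta>) powr \<gamma> = (K / a1) * \<Delta> powr \<gamma>"
      unfolding c1hat_def using Kp consts2 Delta_pos g0 by (simp add: powr_mult powr_powr)
    also have "\<dots> = \<delta> powr \<gamma>" using KD consts2 by (simp add: field_simps)
    finally have "(c1hat * \<Delta>) powr \<gamma> = \<delta> powr \<gamma>" .
    then have "((c1hat * \<Delta>) powr \<gamma>) powr (1/\<gamma>) = (\<delta> powr \<gamma>) powr (1/\<gamma>)" by simp
    moreover have "c1hat * \<Delta> = ((c1hat * \<Delta>) powr \<gamma>) powr (1/\<gamma>)"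
      using g0 c1hat1 Delta_pos by (simp add: powr_powr)
    moreover have "\<delta> = (\<delta> powr \<gamma>) powr (1/\<gamma>)"
      using g0 consts2 by (simp add: powr_powr)
    ultimately show ?thesis by simp
  qed
  have b0': "b > 0" using b_def consts2 by simp
  have c0': "c > 0" using c_def consts2 by simp
  define MM where "MM = 2 * max 1 h"
  have MM: "MM \<ge> 2" by (simp add: MM_def)
  have rho_eq: "\<rho> * (b powr pp * MM powr k) = c"
    using rho_def b0' MM by (simp add: pp_def k_def MM_def)
  have rho0: "\<rho> > 0" using rho_def b0' c0' MM by (simp add: MM_def)
  have dissip: "\<rho> * (b * (norm (\<psi> 0) powr \<gamma> + integral {-h..0} (\<lambda>\<theta>. norm (\<psi> \<theta>) powr \<gamma>))) powr pp
      \<le> c * (norm (\<psi> 0) powr (\<gamma> + \<mu> - 1) + integral {-h..0} (\<lambda>\<theta>. norm (\<psi> \<theta>) powr (\<gamma> + \<mu> - 1)))"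
    if cpsi: "continuous_on {-h..0} \<psi>" for \<psi> :: "real \<Rightarrow> 'a"
  proof -
    define A0 where "A0 = norm (\<psi> 0) powr \<gamma>"
    define A where "A = norm (\<psi> 0) powr (\<gamma> + \<mu> - 1)"
    define I where "I = integral {-h..0} (\<lambda>\<theta>. norm (\<psi> \<theta>) powr \<gamma>)"
    define J where "J = integral {-h..0} (\<lambda>\<theta>. norm (\<psi> \<theta>) powr (\<gamma> + \<mu> - 1))"
    have gpp: "\<gamma> * pp = \<gamma> + \<mu> - 1" using g0 by (simp add: pp_def)
    have pp1: "pp \<ge> 1" using pp_eq k0 by simp
    have I0: "I \<ge> 0" unfolding I_def by (rule int_nonneg) simp
    have J0: "J \<ge> 0" unfolding J_def by (rule int_nonneg) simp
    have A00: "A0 \<ge> 0" by (simp add: A0_def)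
    have A0: "A \<ge> 0" by (simp add: A_def)
    have A0A: "A0 powr pp = A" unfolding A0_def A_def by (simp add: powr_powr gpp)
    have Gc: "continuous_on {-h..0} (\<lambda>\<theta>. norm (\<psi> \<theta>) powr \<gamma>)"
      by (rule continuous_on_powr') (use cpsi g0 in \<open>auto intro: continuous_intros\<close>)
    have "I powr pp \<le> h powr (pp - 1) * integral {-h..0} (\<lambda>\<theta>. (norm (\<psi> \<theta>) powr \<gamma>) powr pp)"
      unfolding I_def by (rule int_jensen[OF h_pos pp1 Gc]) simp
    also have "integral {-h..0} (\<lambda>\<theta>. (norm (\<psi> \<theta>) powr \<gamma>) powr pp) = J"
      unfolding J_def by (simp add: powr_powr gpp)
    finally have IJ: "I powr pp \<le> h powr k * J" using pp_eq by simp
    have "(A0 + I) powr pp \<le> 2 powr (pp - 1) * (A0 powr pp + I powr pp)"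
      by (rule powr_sum_le[OF A00 I0 pp1])
    also have "\<dots> \<le> 2 powr k * (A + max 1 h powr k * J)"
    proof -
      have "h powr k \<le> max 1 h powr k" using h_pos k0 by (intro powr_mono2) auto
      then have "I powr pp \<le> max 1 h powr k * J" using IJ J0 by (smt (verit) mult_right_mono)
      then show ?thesis using A0A pp_eq by (simp add: mult_left_mono)
    qed
    also have "\<dots> \<le> MM powr k * (A + J)"
    proof -
      have "1 \<le> max 1 h powr k" using k0 by (simp add: ge_one_powr_ge_zero)
      then have "1 * A \<le> max 1 h powr k * A" using A0 by (rule mult_right_mono)
      then have "A + max 1 h powr k * J \<le> max 1 h powr k * (A + J)"
        by (simp add: distrib_left)
      then have "2 powr k * (A + max 1 h powr k * J) \<le> 2 powr k * (max 1 h powr k * (A + J))"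
        by (simp add: mult_left_mono)
      also have "\<dots> = MM powr k * (A + J)" unfolding MM_def by (simp add: powr_mult)
      finally show ?thesis .
    qed
    finally have main: "(A0 + I) powr pp \<le> MM powr k * (A + J)" .
    have "\<rho> * (b * (A0 + I)) powr pp = \<rho> * b powr pp * (A0 + I) powr pp"
      using b0' A00 I0 by (simp add: powr_mult)
    also have "\<dots> \<le> \<rho> * b powr pp * (MM powr k * (A + J))"
      using main rho0 b0' by (simp add: mult_left_mono)
    also have "\<dots> = c * (A + J)" using rho_eq by (simp add: algebra_simps)
    finally show ?thesis by (simp add: A0_def A_def I_def J_def)
  qed
  have c2hat0: "c2hat \<ge> 0" unfolding c2hat_def using rhot mu_gt g0 by simp
  have c2k: "c2hat = \<rho>t * k * K powr k" unfolding c2hat_def k_def by simp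
  show ?thesis
  proof (intro allI impI)
    fix \<phi> :: "real \<Rightarrow> 'a" and T :: real and x :: "real \<Rightarrow> 'a"
    assume asm: "continuous_on {-h..0} \<phi> \<and> hnorm h \<phi> < \<Delta> \<and> T > 0 \<and> is_solution f B Q h \<phi> T x"
    then have c\<phi>: "continuous_on {-h..0} \<phi>" and rD: "hnorm h \<phi> < \<Delta>" and T0: "T > 0"
      and sol: "is_solution f B Q h \<phi> T x" by auto
    have xc: "continuous_on {-h..<T} x" and x\<phi>: "\<And>\<theta>. \<theta> \<in> {-h..0} \<Longrightarrow> x \<theta> = \<phi> \<theta>"
      using sol unfolding is_solution_def by auto
    define r where "r = hnorm h \<phi>"
    have r0: "0 \<le> r" unfolding r_def using hn_ge[OF c\<phi> z0] norm_ge_zero order_trans by blast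
    have rD': "r < \<Delta>" using rD by (simp add: r_def)
    have nphi: "norm (\<phi> \<theta>) \<le> r" if "\<theta> \<in> {-h..0}" for \<theta> using hn_ge[OF c\<phi> that] by (simp add: r_def)
    define a where "a = c2hat * r powr (\<mu> - 1)"
    have a0: "a \<ge> 0" unfolding a_def using c2hat0 by simp
    define e where "e = 1 / (\<mu> - 1)"
    have e0: "e > 0" using mu_gt by (simp add: e_def)
    define \<psi> where "\<psi> = (\<lambda>t. c1hat * r * (1 + a * t) powr (- 1 / (\<mu> - 1)))"
    have psi_alt: "\<psi> t = c1hat * r / (1 + a * t) powr e" if "t \<ge> 0" for t
    proof -
      have "- 1 / (\<mu> - 1) = - e" by (simp add: e_def)
      moreover have "1 + a * t > 0" using a0 that by (simp add: add_pos_nonneg)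
      ultimately show ?thesis by (simp add: \<psi>_def powr_minus_divide)
    qed
    have psi0: "\<psi> 0 = c1hat * r" by (simp add: \<psi>_def)
    have psi_nonneg: "\<psi> t \<ge> 0" for t using c1hat1 r0 by (simp add: \<psi>_def)
    have psi_dec: "\<psi> u \<le> c1hat * r" if "u \<ge> 0" for u
    proof -
      have "1 \<le> (1 + a * u) powr e" using a0 that e0 by (simp add: ge_one_powr_ge_zero)
      moreover have "0 \<le> c1hat * r" using c1hat1 r0 by simp
      ultimately have "c1hat * r / (1 + a * u) powr e \<le> c1hat * r / 1"
        by (intro divide_left_mono) auto
      then show ?thesis using psi_alt[OF that] by simp
    qed
    have psi_ratio: "\<psi> u \<le> \<alpha> * \<psi> s" if "0 \<le> u" "u \<le> s" "s \<le> u + h" for u s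
    proof -
      have ah: "1 + a * h \<le> \<alpha> powr (\<mu> - 1)"
      proof -
        have "r powr (\<mu> - 1) \<le> \<Delta> powr (\<mu> - 1)" using r0 rD' mu_gt by (intro powr_mono2) auto
        then have "a * h \<le> c2hat * \<Delta> powr (\<mu> - 1) * h" unfolding a_def using c2hat0 h_pos
          by (intro mult_right_mono mult_left_mono) auto
        also have "\<dots> = \<rho>t * h * ((\<mu> - 1) / \<gamma>) * K powr ((\<mu> - 1) / \<gamma>) * \<Delta> powr (\<mu> - 1)"
          unfolding c2hat_def by (simp add: algebra_simps)
        finally show ?thesis using rhot_ineq by simp
      qed
      have "1 + a * s \<le> (1 + a * u) * (1 + a * h)"
      proof -
        have "a * s \<le> a * (u + h)" using a0 that by (intro mult_left_mono) auto
        then have "a * s \<le> a * u + a * h" by (simp add: distrib_left)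
        moreover have "0 \<le> a * u * (a * h)" using a0 that h_pos by simp
        ultimately show ?thesis by (simp add: algebra_simps)
      qed
      also have "\<dots> \<le> (1 + a * u) * \<alpha> powr (\<mu> - 1)"
        using ah a0 that by (intro mult_left_mono) auto
      finally have le1: "1 + a * s \<le> (1 + a * u) * \<alpha> powr (\<mu> - 1)" .
      have pu: "1 + a * u > 0" "1 + a * s > 0" using a0 that
        by (simp_all add: add_pos_nonneg)
      have "(1 + a * s) powr e \<le> ((1 + a * u) * \<alpha> powr (\<mu> - 1)) powr e"
        using le1 pu e0 by (intro powr_mono2) auto
      also have "\<dots> = (1 + a * u) powr e * \<alpha>"
        using pu alpha_gt mu_gt by (simp add: powr_mult powr_powr e_def)
      finally have key: "(1 + a * s) powr e \<le> (1 + a * u) powr e * \<alpha>" .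
      have "c1hat * r / (1 + a * u) powr e \<le> \<alpha> * (c1hat * r / (1 + a * s) powr e)"
      proof -
        have cr: "0 \<le> c1hat * r" using c1hat1 r0 by simp
        have "c1hat * r * (1 + a * s) powr e \<le> c1hat * r * ((1 + a * u) powr e * \<alpha>)"
          using key cr by (rule mult_left_mono)
        then show ?thesis using pu by (simp add: field_simps)
      qed
      then show ?thesis using psi_alt that by simp
    qed
    define Z where "Z = (\<lambda>s. K * r powr \<gamma> * (1 + a * s) powr (- 1 / k))"
    have Zpsi: "a1 * \<psi> s powr \<gamma> = Z s" if "s \<ge> 0" for s
    proof -
      have pu: "1 + a * s > 0" using a0 that by (simp add: add_pos_nonneg)
      have cg: "c1hat powr \<gamma> = K / a1" unfolding c1hat_def using Kp consts2 g0 by (simp add: powr_powr)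
      have "\<psi> s powr \<gamma> = c1hat powr \<gamma> * r powr \<gamma> * ((1 + a * s) powr (- 1 / (\<mu> - 1))) powr \<gamma>"
        unfolding \<psi>_def using c1hat1 r0 pu by (simp add: powr_mult)
      also have "((1 + a * s) powr (- 1 / (\<mu> - 1))) powr \<gamma> = (1 + a * s) powr (- 1 / k)"
        using g0 mu_gt by (simp add: powr_powr k_def)
      finally show ?thesis using cg consts2 by (simp add: Z_def)
    qed
    have Zder: "(Z has_real_derivative (- \<rho>t * Z s powr pp)) (at s)" if "s \<ge> 0" for s
    proof -
      have pu: "1 + a * s > 0" using a0 that by (simp add: add_pos_nonneg)
      have d: "(Z has_real_derivative (K * r powr \<gamma> * ((- 1 / k) * (1 + a * s) powr (- 1 / k - 1) * a))) (at s)"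
      proof -
        have dg: "((\<lambda>s. 1 + a * s) has_real_derivative a) (at s)" by (auto intro!: derivative_eq_intros)
        have "((\<lambda>s. (1 + a * s) powr (- 1 / k)) has_real_derivative ((- 1 / k) * (1 + a * s) powr (- 1 / k - 1) * a)) (at s)"
          using DERIV_chain2[where f="\<lambda>z. z powr (- 1 / k)" and g="\<lambda>s. 1 + a * s", OF has_real_derivative_powr[OF pu] dg]
          by simp
        then show ?thesis unfolding Z_def by (rule DERIV_cmult)
      qed
      have eq: "K * r powr \<gamma> * ((- 1 / k) * (1 + a * s) powr (- 1 / k - 1) * a) = - \<rho>t * Z s powr pp"
      proof -
        have e1: "K powr pp = K * K powr k" using Kp pp_eq by (simp add: powr_add)
        have e2: "(r powr \<gamma>) powr pp = r powr \<gamma> * r powr (\<mu> - 1)"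
        proof -
          have "\<gamma> * pp = \<gamma> + (\<mu> - 1)" using gk pp_eq by (simp add: algebra_simps)
          then show ?thesis by (simp add: powr_powr powr_add)
        qed
        have e3: "((1 + a * s) powr (- 1 / k)) powr pp = (1 + a * s) powr (- 1 / k - 1)"
        proof -
          have "- 1 / k * pp = - 1 / k - 1" using k0 pp_eq by (simp add: field_simps)
          then show ?thesis by (simp add: powr_powr)
        qed
        have "Z s powr pp = K powr pp * (r powr \<gamma>) powr pp * ((1 + a * s) powr (- 1 / k)) powr pp"
          unfolding Z_def using Kp r0 pu by (simp add: powr_mult)
        also have "\<dots> = K * K powr k * (r powr \<gamma> * r powr (\<mu> - 1)) * (1 + a * s) powr (- 1 / k - 1)"
          using e1 e2 e3 by simp
        finally have "Z s powr pp = K * K powr k * (r powr \<gamma> * r powr (\<mu> - 1)) * (1 + a * s) powr (- 1 / k - 1)" .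
        then show ?thesis unfolding a_def c2k using k0 by (simp add: field_simps)
      qed
      show ?thesis using d eq by simp
    qed
    have Z0: "Z 0 = K * r powr \<gamma>" by (simp add: Z_def)
    have cr: "r \<le> c1hat * r" using c1hat1 r0 mult_right_mono[of 1 c1hat r] by simp
    have crD: "c1hat * r < \<delta>"
    proof -
      have "c1hat * r < c1hat * \<Delta>" using rD' c1hat1 by (intro mult_strict_left_mono) auto
      then show ?thesis using c1hatD by simp
    qed
    have cstate: "continuous_on {-h..0} (state x s)" if "0 \<le> s" "s < T" for s
      unfolding state_def
      by (rule continuous_on_compose2[OF xc]) (use that in \<open>auto intro!: continuous_intros\<close>)
    have hstate0: "hnorm h (state x 0) = r"
      unfolding hnorm_def state_def r_def using x\<phi> by (auto intro: SUP_cong)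
    have goal_psi: "norm (x t) \<le> \<psi> t" if t: "t \<in> {0..<T}" for t
    proof (rule ccontr)
      assume "\<not> norm (x t) \<le> \<psi> t"
      then have gt: "\<psi> t < norm (x t)" by simp
      define \<eta> where "\<eta> = min ((norm (x t) - \<psi> t) / 2) ((\<delta> - c1hat * r) / 2)"
      have eta0: "\<eta> > 0" using gt crD by (simp add: \<eta>_def)
      have "\<eta> \<le> (norm (x t) - \<psi> t) / 2" "\<eta> \<le> (\<delta> - c1hat * r) / 2" unfolding \<eta>_def by (rule min.cobounded1, rule min.cobounded2)
      then have eta1: "\<psi> t + \<eta> < norm (x t)" and eta2: "c1hat * r + \<eta> \<le> \<delta>" using gt crD by auto
      have t0: "0 \<le> t" "t < T" using t by auto
      have "{0..t} \<subseteq> {-h..<T}" using t0 h_pos by auto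
      then have xc0: "continuous_on {0..t} x" by (rule continuous_on_subset[OF xc])
      have psic: "continuous_on {0..t} \<psi>" unfolding \<psi>_def
        by (intro continuous_intros) (use a0 in \<open>auto simp: add_nonneg_eq_0_iff\<close>)
      define E where "E = {s \<in> {0..t}. (\<lambda>s. \<psi> s + \<eta>) s \<le> (\<lambda>s. norm (x s)) s}"
      have Ec: "closed E" unfolding E_def
        by (rule continuous_on_closed_Collect_le) (use psic xc0 in \<open>auto intro: continuous_intros\<close>)
      have tE: "t \<in> E" using eta1 t0 by (simp add: E_def)
      define ts where "ts = Inf E"
      have bddE: "bdd_below E" by (auto simp: E_def intro: bdd_belowI[of _ 0])
      have tsE: "ts \<in> E" unfolding ts_def using closed_contains_Inf[OF _ bddE Ec] tE by auto
      have ts_range: "0 \<le> ts" "ts \<le> t" using tsE by (auto simp: E_def)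
      have tsle: "ts \<le> s" if "s \<in> E" for s unfolding ts_def using that bddE by (rule cInf_lower)
      have before: "norm (x s) < \<psi> s + \<eta>" if "0 \<le> s" "s < ts" for s
      proof (rule ccontr)
        assume "\<not> ?thesis" then have "s \<in> E" using that ts_range by (auto simp: E_def)
        then show False using tsle that by force
      qed
      have x0: "norm (x 0) \<le> r" using x\<phi>[OF z0] nphi[OF z0] by simp
      have nts: "\<psi> ts + \<eta> \<le> norm (x ts)" using tsE by (simp add: E_def)
      have ts_pos: "ts > 0"
      proof (rule ccontr)
        assume "\<not> ts > 0" then have "ts = 0" using ts_range by simp
        then have "\<psi> 0 + \<eta> \<le> norm (x 0)" using nts by simp
        then show False using x0 psi0 cr eta0 by simp
      qed
      have at_ts: "norm (x ts) \<le> \<psi> ts + \<eta>"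
      proof -
        define F where "F = {s \<in> {0..ts}. (\<lambda>s. norm (x s)) s \<le> (\<lambda>s. \<psi> s + \<eta>) s}"
        have Fc: "closed F" unfolding F_def
          by (rule continuous_on_closed_Collect_le)
             (use continuous_on_subset[OF psic, of "{0..ts}"] continuous_on_subset[OF xc0, of "{0..ts}"] ts_range
              in \<open>auto intro: continuous_intros\<close>)
        have "{0..<ts} \<subseteq> F" using before by (auto simp: F_def intro: less_imp_le)
        then have "closure {0..<ts} \<subseteq> F" using Fc by (rule closure_minimal)
        then have "ts \<in> F" using ts_pos by auto
        then show ?thesis by (simp add: F_def)
      qed
      have xbound: "norm (x u) \<le> c1hat * r + \<eta>" if "-h \<le> u" "u \<le> ts" for u
      proof (cases "u < 0")
        case True
        then have "norm (x u) \<le> r" using x\<phi>[of u] nphi[of u] that by simp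
        then show ?thesis using cr eta0 by simp
      next
        case False
        show ?thesis
        proof (cases "u = ts")
          case True then show ?thesis using at_ts psi_dec[of ts] ts_range by simp
        next
          case False
          then have "norm (x u) < \<psi> u + \<eta>" using before[of u] \<open>\<not> u < 0\<close> that by simp
          then show ?thesis using psi_dec[of u] \<open>\<not> u < 0\<close> by simp
        qed
      qed
      have sT: "ts < T" using ts_range t0 by simp
      have hstate: "hnorm h (state x s) \<le> \<delta>" if "0 \<le> s" "s \<le> ts" for s
      proof (rule hn_le)
        fix \<theta> :: real assume th: "\<theta> \<in> {-h..0}"
        have "norm (x (s + \<theta>)) \<le> c1hat * r + \<eta>" using xbound[of "s + \<theta>"] th that by simp
        then show "norm (state x s \<theta>) \<le> \<delta>" using eta2 by (simp add: state_def)
      qed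
      have Sa: "state x ts \<in> S_alpha h \<alpha>"
        unfolding S_alpha_def state_def
      proof (intro CollectI ballI)
        fix \<theta> :: real assume th: "\<theta> \<in> {-h..0}"
        have an: "\<alpha> * (\<psi> ts + \<eta>) \<le> \<alpha> * norm (x ts)" using nts alpha_gt by simp
        have "norm (x (ts + \<theta>)) \<le> \<alpha> * norm (x ts)"
        proof (cases "ts + \<theta> < 0")
          case True
          then have "norm (x (ts + \<theta>)) \<le> r" using x\<phi>[of "ts + \<theta>"] nphi[of "ts + \<theta>"] th ts_range by simp
          also have "\<dots> \<le> \<psi> 0" using cr psi0 by simp
          also have "\<dots> \<le> \<alpha> * \<psi> ts" using psi_ratio[of 0 ts] ts_range True th by simp
          also have "\<dots> \<le> \<alpha> * (\<psi> ts + \<eta>)" using alpha_gt eta0 by simp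
          finally show ?thesis using an by simp
        next
          case False
          show ?thesis
          proof (cases "\<theta> = 0")
            case True then show ?thesis using alpha_gt mult_right_mono[of 1 \<alpha> "norm (x ts)"] by simp
          next
            case False
            then have lt: "ts + \<theta> < ts" using th by simp
            have "norm (x (ts + \<theta>)) < \<psi> (ts + \<theta>) + \<eta>" using before[of "ts + \<theta>"] lt \<open>\<not> ts + \<theta> < 0\<close> by simp
            also have "\<dots> \<le> \<alpha> * \<psi> ts + \<eta>" using psi_ratio[of "ts + \<theta>" ts] lt \<open>\<not> ts + \<theta> < 0\<close> th by simp
            also have "\<dots> \<le> \<alpha> * (\<psi> ts + \<eta>)" using alpha_gt eta0 by (simp add: algebra_simps)
            finally show ?thesis using an by simp
          qed
        qed
        then show "norm (x (ts + \<theta>)) \<le> \<alpha> * norm (x (ts + 0))" by simp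
      qed
      define vv where "vv = (\<lambda>s. vfun V DV f B Q h \<epsilon> w1 w2 \<gamma> \<mu> s (state x s))"
      have "\<forall>s\<in>{0..ts}. \<exists>D. (vv has_real_derivative D) (at s within {0..<T}) \<and>
              D \<le> - c0 * norm (x s) powr (\<gamma> + \<mu> - 1) - c1 * norm (x (s - h)) powr (\<gamma> + \<mu> - 1)
                   - c2 * integral {-h..0} (\<lambda>\<theta>. norm (x (s + \<theta>)) powr (\<gamma> + \<mu> - 1))"
      proof
        fix s assume s: "s \<in> {0..ts}"
        then have "s \<in> {0..<T}" using sT by auto
        moreover have "hnorm h (state x s) \<le> \<delta>" using hstate s by auto
        ultimately show "\<exists>D. (vv has_real_derivative D) (at s within {0..<T}) \<and>
              D \<le> - c0 * norm (x s) powr (\<gamma> + \<mu> - 1) - c1 * norm (x (s - h)) powr (\<gamma> + \<mu> - 1)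
                   - c2 * integral {-h..0} (\<lambda>\<theta>. norm (x (s + \<theta>)) powr (\<gamma> + \<mu> - 1))"
          using L1 c\<phi> T0 sol unfolding vv_def by blast
      qed
      from bchoice[OF this] obtain Dv where Dv: "\<forall>s\<in>{0..ts}. (vv has_real_derivative Dv s) (at s within {0..<T}) \<and>
              Dv s \<le> - c0 * norm (x s) powr (\<gamma> + \<mu> - 1) - c1 * norm (x (s - h)) powr (\<gamma> + \<mu> - 1)
                   - c2 * integral {-h..0} (\<lambda>\<theta>. norm (x (s + \<theta>)) powr (\<gamma> + \<mu> - 1))"
        by blast
      define DD where "DD = (\<lambda>s. vv s - Z s)"
      define DD' where "DD' = (\<lambda>s. Dv s + \<rho>t * Z s powr pp)"
      have "DD ts \<le> 0"
      proof (rule compare[of 0 ts DD DD'])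
        show "0 \<le> ts" by (rule ts_range(1))
      next
        fix s assume s: "s \<in> {0..ts}"
        have d1: "(vv has_real_derivative Dv s) (at s within {0..ts})"
        proof -
          have "(vv has_real_derivative Dv s) (at s within {0..<T})" using Dv s by blast
          moreover have "{0..ts} \<subseteq> {0..<T}" using sT by auto
          ultimately show ?thesis by (rule DERIV_subset)
        qed
        have d2: "(Z has_real_derivative (- \<rho>t * Z s powr pp)) (at s within {0..ts})"
          using Zder[of s] s by (auto intro: has_field_derivative_at_within)
        show "(DD has_real_derivative DD' s) (at s within {0..ts})"
          unfolding DD_def DD'_def using DERIV_diff[OF d1 d2] by simp
      next
        have "vv 0 \<le> K * hnorm h (state x 0) powr \<gamma>"
          unfolding vv_def by (rule vupper) (use cstate[of 0] T0 hstate0 rD' in auto)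
        then show "DD 0 \<le> 0" using hstate0 Z0 by (simp add: DD_def)
      next
        fix s assume s: "s \<in> {0..ts}" and pos: "DD s > 0"
        have sT': "0 \<le> s" "s < T" using s sT by auto
        have Zs0: "Z s \<ge> 0" using Kp by (simp add: Z_def)
        have vpos: "vv s > Z s" using pos by (simp add: DD_def)
        define A0 where "A0 = norm (state x s 0) powr \<gamma>"
        define I where "I = integral {-h..0} (\<lambda>\<theta>. norm (state x s \<theta>) powr \<gamma>)"
        define A where "A = norm (state x s 0) powr (\<gamma> + \<mu> - 1)"
        define J where "J = integral {-h..0} (\<lambda>\<theta>. norm (state x s \<theta>) powr (\<gamma> + \<mu> - 1))"
        have I0: "I \<ge> 0" unfolding I_def by (rule int_nonneg) simp
        have J0: "J \<ge> 0" unfolding J_def by (rule int_nonneg) simp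
        have A00: "A0 \<ge> 0" by (simp add: A0_def)
        have A0': "A \<ge> 0" by (simp add: A_def)
        have "vv s \<le> b0 * A0 + b1 * I"
          using L3 cstate[OF sT'] hstate[of s] s sT' unfolding vv_def A0_def I_def by auto
        also have "\<dots> \<le> b * A0 + b * I" using A00 I0 b_def by (intro add_mono mult_right_mono) auto
        finally have vb: "vv s \<le> b * (A0 + I)" by (simp add: distrib_left)
        have "vv s powr pp \<le> (b * (A0 + I)) powr pp"
          using vb vpos Zs0 pp_eq k0 by (intro powr_mono2) auto
        then have "\<rho> * vv s powr pp \<le> \<rho> * (b * (A0 + I)) powr pp" using rho0 by simp
        also have "\<dots> \<le> c * (A + J)" using dissip[OF cstate[OF sT']] unfolding A0_def I_def A_def J_def .
        finally have rv: "\<rho> * vv s powr pp \<le> c * (A + J)" .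
        have Dvs: "Dv s \<le> - c0 * A - c1 * norm (x (s - h)) powr (\<gamma> + \<mu> - 1) - c2 * J"
          using Dv s unfolding A_def J_def state_def by simp
        have "c * A \<le> c0 * A" "c * J \<le> c2 * J" using A0' J0 c_def by (auto intro: mult_right_mono)
        moreover have "0 \<le> c1 * norm (x (s - h)) powr (\<gamma> + \<mu> - 1)" using consts2 by simp
        ultimately have Dvs2: "Dv s \<le> - (c * (A + J))" using Dvs by (simp add: distrib_left)
        have "Z s powr pp < vv s powr pp" using Zs0 vpos pp_eq k0 by (intro powr_less_mono2) auto
        then have "\<rho>t * Z s powr pp < \<rho>t * vv s powr pp" using rhot by simp
        also have "\<dots> < \<rho> * vv s powr pp"
        proof -
          have "vv s powr pp > 0" using vpos Zs0 by simp
          then show ?thesis using rhot by simp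
        qed
        finally show "DD' s < 0" using Dvs2 rv by (simp add: DD'_def)
      qed
      then have vts: "vv ts \<le> a1 * \<psi> ts powr \<gamma>" using Zpsi[of ts] ts_range by (simp add: DD_def)
      have "vv ts \<ge> a1 * norm (state x ts 0) powr \<gamma> + w1 * integral {-h..0} (\<lambda>\<theta>. norm (state x ts \<theta>) powr (\<gamma> + \<mu> - 1))"
        using L2 cstate[of ts] sT ts_range Sa hstate[of ts] unfolding vv_def by blast
      moreover have "state x ts 0 = x ts" by (simp add: state_def)
      ultimately have "vv ts \<ge> a1 * norm (x ts) powr \<gamma> + w1 * integral {-h..0} (\<lambda>\<theta>. norm (state x ts \<theta>) powr (\<gamma> + \<mu> - 1))"
        by simp
      moreover have "0 \<le> w1 * integral {-h..0} (\<lambda>\<theta>. norm (state x ts \<theta>) powr (\<gamma> + \<mu> - 1))"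
        using w12 int_nonneg[of "-h" 0 "\<lambda>\<theta>. norm (state x ts \<theta>) powr (\<gamma> + \<mu> - 1)"] by simp
      ultimately have "a1 * norm (x ts) powr \<gamma> \<le> a1 * \<psi> ts powr \<gamma>" using vts by simp
      then have "norm (x ts) powr \<gamma> \<le> \<psi> ts powr \<gamma>" using consts2 by simp
      then have "(norm (x ts) powr \<gamma>) powr (1 / \<gamma>) \<le> (\<psi> ts powr \<gamma>) powr (1 / \<gamma>)"
        using g0 powr_mono2[of "1 / \<gamma>" "norm (x ts) powr \<gamma>" "\<psi> ts powr \<gamma>"] by simp
      moreover have "(norm (x ts) powr \<gamma>) powr (1 / \<gamma>) = norm (x ts)" using g0 by (simp add: powr_powr)
      moreover have "(\<psi> ts powr \<gamma>) powr (1 / \<gamma>) = \<psi> ts" using g0 psi_nonneg[of ts] by (simp add: powr_powr)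
      ultimately have "norm (x ts) \<le> \<psi> ts" by simp
      then show False using nts eta0 by simp
    qed
    show "\<forall>t\<in>{0..<T}. norm (x t) \<le> c1hat * hnorm h \<phi> * (1 + c2hat * hnorm h \<phi> powr (\<mu> - 1) * t) powr (- 1 / (\<mu> - 1))"
      using goal_psi by (simp add: \<psi>_def a_def r_def)
  qed
qed

end
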